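(* There is a constant $c>0$ such that for every unit interval graph $G=(V,E)$ with $N=|V|\ge 2$ nodes, labeled $v_0,\dots,v_{N-1}$ in increasing order of the left endpoints of their intervals, the minimal $\pi$-OBDD representing $\chi_E$ has at most $c\,N/\log N$ nodes, where $\pi$ is the $2$-interleaved variable order with decreasing significance.
   Context: A unit interval graph on $N$ nodes is given by intervals $[a_i,a_i+1]$, $0\le i\le N-1$; two distinct nodes are adjacent iff their intervals intersect. Without loss of generality all endpoints are distinct, and the nodes are labeled so that $a_0<a_1<\dots<a_{N-1}$. Let $n=\lceil\log_2 N\rceil$. For $x=(x_0,\dots,x_{n-1})\in\{0,1\}^n$ put $|x|=\sum_{i=0}^{n-1}x_i2^i$. The characteristic function $\chi_E:\{0,1\}^{2n}\to\{0,1\}$ is defined by $\chi_E(x,y)=1$ iff $|x|,|y|<N$ and $\{v_{|x|},v_{|y|}\}\in E$. A $\pi$-OBDD for a variable order $\pi$ (a linear order of the input variables) is a directed acyclic rooted graph with two sinks labeled $0$ and $1$. Every inner node is labeled by a variable and has two outgoing edges labeled $0$ and $1$, and along every edge the variables respect $\pi$. An assignment determines a path from the root by following, at each node labeled $x_i$, the edge labeled by the value of $x_i$. The OBDD represents $f$ if this path always ends in the sink labeled $f(\text{assignment})$. The size of an OBDD is its number of nodes. The $2$-interleaved variable order with decreasing significance on $x,y\in\{0,1\}^n$ is $(x_{n-1},y_{n-1},x_{n-2},y_{n-2},\dots,x_0,y_0)$. *)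

theory Defs
  imports Complex_Main
begin

text \<open>Input variables: (False, i) stands for x_i and (True, i) stands for y_i.
  An assignment gives a Boolean value to every variable.\<close>

type_synonym var = "bool \<times> nat"

record obdd =
  nodes :: "nat set"
  root  :: nat
  sink0 :: nat
  sink1 :: nat
  var   :: "nat \<Rightarrow> var"
  lo    :: "nat \<Rightarrow> nat"
  hi    :: "nat \<Rightarrow> nat"

definition inner :: "obdd \<Rightarrow> nat set" where
  "inner B = nodes B - {sink0 B, sink1 B}"

definition precedes :: "var list \<Rightarrow> var \<Rightarrow> var \<Rightarrow> bool" where
  "precedes vo v w \<longleftrightarrow> (\<exists>i j. i < j \<and> j < length vo \<and> vo ! i = v \<and> vo ! j = w)"

definition is_pi_obdd :: "var list \<Rightarrow> obdd \<Rightarrow> bool" where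
  "is_pi_obdd vo B \<longleftrightarrow>
     finite (nodes B) \<and> root B \<in> nodes B \<and>
     sink0 B \<in> nodes B \<and> sink1 B \<in> nodes B \<and> sink0 B \<noteq> sink1 B \<and>
     (\<forall>u \<in> inner B. var B u \<in> set vo \<and> lo B u \<in> nodes B \<and> hi B u \<in> nodes B \<and>
        (lo B u \<in> inner B \<longrightarrow> precedes vo (var B u) (var B (lo B u))) \<and>
        (hi B u \<in> inner B \<longrightarrow> precedes vo (var B u) (var B (hi B u))))"

inductive path_ends :: "obdd \<Rightarrow> (var \<Rightarrow> bool) \<Rightarrow> nat \<Rightarrow> nat \<Rightarrow> bool" for B a where
  sink0: "path_ends B a (sink0 B) (sink0 B)"
| sink1: "path_ends B a (sink1 B) (sink1 B)"
| step: "u \<in> inner B \<Longrightarrow> path_ends B a (if a (var B u) then hi B u else lo B u) s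
          \<Longrightarrow> path_ends B a u s"

definition represents :: "obdd \<Rightarrow> ((var \<Rightarrow> bool) \<Rightarrow> bool) \<Rightarrow> bool" where
  "represents B f \<longleftrightarrow>
     (\<forall>a. path_ends B a (root B) (if f a then sink1 B else sink0 B))"

definition min_obdd_size :: "var list \<Rightarrow> ((var \<Rightarrow> bool) \<Rightarrow> bool) \<Rightarrow> nat" where
  "min_obdd_size vo f = (LEAST k. \<exists>B. is_pi_obdd vo B \<and> represents B f \<and> card (nodes B) = k)"

definition interleaved_order :: "nat \<Rightarrow> var list" where
  "interleaved_order n = concat (map (\<lambda>i. [(False, i), (True, i)]) (rev [0..<n]))"

definition bits_x :: "nat \<Rightarrow> (var \<Rightarrow> bool) \<Rightarrow> nat" where
  "bits_x n a = (\<Sum>i<n. if a (False, i) then 2 ^ i else 0)"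

definition bits_y :: "nat \<Rightarrow> (var \<Rightarrow> bool) \<Rightarrow> nat" where
  "bits_y n a = (\<Sum>i<n. if a (True, i) then 2 ^ i else 0)"

definition nbits :: "nat \<Rightarrow> nat" where
  "nbits N = nat \<lceil>log 2 (real N)\<rceil>"

text \<open>Unit interval graph given by left endpoints l 0 < ... < l (N-1), all 2N endpoints distinct.\<close>
definition unit_interval_rep :: "nat \<Rightarrow> (nat \<Rightarrow> real) \<Rightarrow> bool" where
  "unit_interval_rep N l \<longleftrightarrow>
     (\<forall>i j. i < j \<and> j < N \<longrightarrow> l i < l j) \<and>
     (\<forall>i < N. \<forall>j < N. l i \<noteq> l j + 1)"

definition uig_edge :: "(nat \<Rightarrow> real) \<Rightarrow> nat \<Rightarrow> nat \<Rightarrow> bool" where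
  "uig_edge l i j \<longleftrightarrow> i \<noteq> j \<and> {l i..l i + 1} \<inter> {l j..l j + 1} \<noteq> {}"

definition chi_E :: "nat \<Rightarrow> (nat \<Rightarrow> real) \<Rightarrow> (var \<Rightarrow> bool) \<Rightarrow> bool" where
  "chi_E N l a \<longleftrightarrow>
     (let n = nbits N in bits_x n a < N \<and> bits_y n a < N \<and> uig_edge l (bits_x n a) (bits_y n a))"

end

theory Submission
  imports Defs
begin

definition mrg :: "var list \<Rightarrow> nat \<Rightarrow> (var\<Rightarrow>bool) \<Rightarrow> (var\<Rightarrow>bool) \<Rightarrow> (var\<Rightarrow>bool)" where
  "mrg vo j p a = (\<lambda>v. if v \<in> set (take j vo) then p v else a v)"

definition subf :: "var list \<Rightarrow> ((var\<Rightarrow>bool)\<Rightarrow>bool) \<Rightarrow> nat \<Rightarrow> (var\<Rightarrow>bool) \<Rightarrow> ((var\<Rightarrow>bool)\<Rightarrow>bool)" where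
  "subf vo f j p = (\<lambda>a. f (mrg vo j p a))"

definition Sl :: "var list \<Rightarrow> ((var\<Rightarrow>bool)\<Rightarrow>bool) \<Rightarrow> nat \<Rightarrow> ((var\<Rightarrow>bool)\<Rightarrow>bool) set" where
  "Sl vo f j = range (subf vo f j)"

definition chd :: "var list \<Rightarrow> nat \<Rightarrow> bool \<Rightarrow> ((var\<Rightarrow>bool)\<Rightarrow>bool) \<Rightarrow> ((var\<Rightarrow>bool)\<Rightarrow>bool)" where
  "chd vo j c g = (\<lambda>a. g (a(vo!j := c)))"

lemma Sl_finite: "finite (Sl vo f j)"
proof -
  have "Sl vo f j \<subseteq> (\<lambda>X. subf vo f j (\<lambda>v. v \<in> X)) ` Pow (set (take j vo))"
  proof
    fix g assume "g \<in> Sl vo f j"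
    then obtain p where g: "g = subf vo f j p" by (auto simp: Sl_def)
    have "g = subf vo f j (\<lambda>v. v \<in> {v \<in> set (take j vo). p v})"
      unfolding g subf_def mrg_def by (rule ext, rule arg_cong[where f=f], rule ext) auto
    then show "g \<in> (\<lambda>X. subf vo f j (\<lambda>v. v \<in> X)) ` Pow (set (take j vo))" by blast
  qed
  then show ?thesis by (rule finite_subset) simp
qed

lemma set_take_Suc: "j < length vo \<Longrightarrow> set (take (Suc j) vo) = insert (vo!j) (set (take j vo))"
  by (simp add: take_Suc_conv_app_nth)

lemma notin_take: "distinct vo \<Longrightarrow> j < length vo \<Longrightarrow> vo!j \<notin> set (take j vo)"
  by (auto simp: nth_image[symmetric] nth_eq_iff_index_eq)

lemma chd_subf: assumes "distinct vo" "j < length vo"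
  shows "chd vo j c (subf vo f j p) = subf vo f (Suc j) (p(vo!j := c))"
  unfolding chd_def subf_def mrg_def
  apply (rule ext, rule arg_cong[where f=f], rule ext)
  using assms notin_take[OF assms] by (auto simp: set_take_Suc)

lemma subf_chd: assumes "distinct vo" "j < length vo"
  shows "subf vo f (Suc j) p = chd vo j (p (vo!j)) (subf vo f j p)"
proof -
  have "p(vo!j := p (vo!j)) = p" by simp
  then show ?thesis using chd_subf[OF assms, of "p (vo!j)" f p] by simp
qed

lemma chd_in: "distinct vo \<Longrightarrow> j < length vo \<Longrightarrow> g \<in> Sl vo f j \<Longrightarrow> chd vo j c g \<in> Sl vo f (Suc j)"
  unfolding Sl_def using chd_subf by blast

lemma Sl_Suc_card: assumes "distinct vo" "j < length vo"
  shows "card (Sl vo f (Suc j)) \<le> 2 * card (Sl vo f j)"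
proof -
  have "Sl vo f (Suc j) \<subseteq> (\<lambda>(c,g). chd vo j c g) ` ((UNIV::bool set) \<times> Sl vo f j)"
  proof
    fix g assume "g \<in> Sl vo f (Suc j)"
    then obtain p where g: "g = subf vo f (Suc j) p" by (auto simp: Sl_def)
    then have g2: "g = (\<lambda>(c,g). chd vo j c g) (p (vo!j), subf vo f j p)" using subf_chd[OF assms] by simp
    have "(p (vo!j), subf vo f j p) \<in> (UNIV::bool set) \<times> Sl vo f j" by (simp add: Sl_def)
    then show "g \<in> (\<lambda>(c,g). chd vo j c g) ` ((UNIV::bool set) \<times> Sl vo f j)" using g2 by blast
  qed
  then have "card (Sl vo f (Suc j)) \<le> card ((UNIV::bool set) \<times> Sl vo f j)"
  proof -
    have fin: "finite ((UNIV::bool set) \<times> Sl vo f j)" by (rule finite_cartesian_product[OF finite_UNIV Sl_finite])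
    have "card (Sl vo f (Suc j)) \<le> card ((\<lambda>(c,g). chd vo j c g) ` ((UNIV::bool set) \<times> Sl vo f j))"
        by (rule card_mono[OF finite_imageI[OF fin]]) (rule \<open>Sl vo f (Suc j) \<subseteq> _\<close>)
    also have "\<dots> \<le> card ((UNIV::bool set) \<times> Sl vo f j)" by (rule card_image_le[OF fin])
    finally show ?thesis .
  qed
  also have "\<dots> = 2 * card (Sl vo f j)" by (simp add: card_cartesian_product)
  finally show ?thesis .
qed

lemma Sl_0: "Sl vo f 0 = {f}"
  unfolding Sl_def subf_def mrg_def by auto

lemma Sl_last_const: assumes dep: "\<And>a a'. (\<forall>v\<in>set vo. a v = a' v) \<Longrightarrow> f a = f a'"
  and "g \<in> Sl vo f (length vo)" shows "g a = g a'"
proof -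
  obtain p where g: "g = subf vo f (length vo) p" using assms(2) by (auto simp: Sl_def)
  have "f (mrg vo (length vo) p a) = f p" "f (mrg vo (length vo) p a') = f p"
    by (rule dep, simp add: mrg_def)+
  then show ?thesis by (simp add: g subf_def)
qed

lemma obdd_upper:
  assumes dist: "distinct vo" and dep: "\<And>a a'. (\<forall>v\<in>set vo. a v = a' v) \<Longrightarrow> f a = f a'"
  shows "min_obdd_size vo f \<le> 2 + (\<Sum>j<length vo. card (Sl vo f j))"
proof -
  define m where "m = length vo"
  define T where "T = Sigma {..<m} (Sl vo f)"
  have finT: "finite T" unfolding T_def by (simp add: Sl_finite)
  obtain h where h: "bij_betw h T {0..<card T}" using ex_bij_betw_finite_nat[OF finT] by blast
  define s0 where "s0 = card T"
  define s1 where "s1 = Suc (card T)"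
  define nd where "nd = (\<lambda>j g. if j < m then h (j,g) else if g (\<lambda>_. False) then s1 else s0)"
  define B where "B = \<lparr> nodes = {0..<card T + 2}, root = nd 0 f, sink0 = s0, sink1 = s1,
     var = (\<lambda>u. vo ! fst (inv_into T h u)),
     lo = (\<lambda>u. nd (Suc (fst (inv_into T h u))) (chd vo (fst (inv_into T h u)) False (snd (inv_into T h u)))),
     hi = (\<lambda>u. nd (Suc (fst (inv_into T h u))) (chd vo (fst (inv_into T h u)) True (snd (inv_into T h u)))) \<rparr>"
  have inner: "inner B = {0..<card T}" by (auto simp: inner_def B_def s0_def s1_def)
  have hinj: "inj_on h T" using h bij_betw_def by blast
  have hT: "\<And>x. x \<in> T \<Longrightarrow> h x \<in> {0..<card T}" using h bij_betwE by blast
  have inv: "\<And>j g. j < m \<Longrightarrow> g \<in> Sl vo f j \<Longrightarrow> inv_into T h (h (j,g)) = (j,g)"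
    using hinj by (simp add: T_def)
  have innerE: "\<And>u. u \<in> inner B \<Longrightarrow> \<exists>j g. j < m \<and> g \<in> Sl vo f j \<and> u = h (j,g)"
  proof -
    fix u assume "u \<in> inner B"
    then have "u \<in> h ` T" using h inner by (simp add: bij_betw_def)
    then show "\<exists>j g. j < m \<and> g \<in> Sl vo f j \<and> u = h (j,g)" by (auto simp: T_def)
  qed
  have ndnodes: "\<And>j g. j \<le> m \<Longrightarrow> g \<in> Sl vo f j \<Longrightarrow> nd j g \<in> nodes B"
  proof -
    fix j g assume "j \<le> m" "g \<in> Sl vo f j"
    then show "nd j g \<in> nodes B"
      using hT[of "(j,g)"] by (auto simp: nd_def B_def T_def s0_def s1_def)
  qed
  have ndinner: "\<And>j g. j \<le> m \<Longrightarrow> g \<in> Sl vo f j \<Longrightarrow> nd j g \<in> inner B \<Longrightarrow> j < m"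
    using inner by (auto simp: nd_def s0_def s1_def split: if_splits)
  have path: "\<And>a d j g. j + d = m \<Longrightarrow> g \<in> Sl vo f j \<Longrightarrow> path_ends B a (nd j g) (if g a then s1 else s0)"
  proof -
    fix a d show "\<And>j g. j + d = m \<Longrightarrow> g \<in> Sl vo f j \<Longrightarrow> path_ends B a (nd j g) (if g a then s1 else s0)"
    proof (induction d)
      case 0
      then have "j = m" by simp
      then have gm: "g \<in> Sl vo f (length vo)" using 0 by (simp add: m_def)
      have ga: "g a = g (\<lambda>_. False)" by (rule Sl_last_const[OF dep gm])
      have ndm: "nd j g = (if g (\<lambda>_. False) then s1 else s0)" using \<open>j = m\<close> by (simp add: nd_def)
      have sk: "sink0 B = s0" "sink1 B = s1" by (simp_all add: B_def)
      show ?case unfolding ndm ga using path_ends.sink0[of B a] path_ends.sink1[of B a] sk by simp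
    next
      case (Suc d j g)
      then have jm: "j < m" by simp
      have uin: "nd j g \<in> inner B" using hT[of "(j,g)"] jm Suc.prems by (simp add: nd_def inner T_def)
      have iv: "inv_into T h (nd j g) = (j,g)" using inv jm Suc.prems by (simp add: nd_def)
      define c where "c = a (vo!j)"
      have ach: "a(vo!j := c) = a" by (simp add: c_def)
      have cin: "chd vo j c g \<in> Sl vo f (Suc j)" using chd_in[OF dist _ Suc.prems(2)] jm unfolding m_def by blast
      have IH: "path_ends B a (nd (Suc j) (chd vo j c g)) (if chd vo j c g a then s1 else s0)"
        using Suc.IH[of "Suc j"] Suc.prems cin by simp
      have eq: "chd vo j c g a = g a" by (simp add: chd_def ach)
      have nxt: "(if a (var B (nd j g)) then hi B (nd j g) else lo B (nd j g)) = nd (Suc j) (chd vo j c g)"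
        by (simp add: B_def iv c_def)
      show ?case
        apply (rule path_ends.step[OF uin])
        using IH eq nxt by (simp add: B_def s0_def s1_def)
    qed
  qed
  have rep: "represents B f"
    unfolding represents_def
  proof
    fix a
    have "path_ends B a (nd 0 f) (if f a then s1 else s0)" by (rule path[where d=m]) (simp_all add: Sl_0)
    moreover have eqs: "root B = nd 0 f" "sink0 B = s0" "sink1 B = s1" by (simp_all add: B_def)
    ultimately show "path_ends B a (root B) (if f a then sink1 B else sink0 B)" by (simp only: eqs)
  qed
  have pi: "is_pi_obdd vo B"
    unfolding is_pi_obdd_def
  proof (intro conjI ballI)
    show "finite (nodes B)" by (simp add: B_def)
    show "root B \<in> nodes B" using ndnodes[of 0 f] Sl_0 by (simp add: B_def)
    show "sink0 B \<in> nodes B" "sink1 B \<in> nodes B" "sink0 B \<noteq> sink1 B" by (auto simp: B_def s0_def s1_def)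
  next
    fix u assume "u \<in> inner B"
    then obtain j g where jg: "j < m" "g \<in> Sl vo f j" "u = h (j,g)" using innerE by blast
    have iv: "inv_into T h u = (j,g)" using inv jg by simp
    have ch: "\<And>c. chd vo j c g \<in> Sl vo f (Suc j)" using chd_in[OF dist _ jg(2)] jg(1) unfolding m_def by blast
    have varu: "var B u = vo ! j" by (simp add: B_def iv)
    show "var B u \<in> set vo" using varu jg m_def by simp
    have loe: "lo B u = nd (Suc j) (chd vo j False g)" by (simp add: B_def iv)
    have hie: "hi B u = nd (Suc j) (chd vo j True g)" by (simp add: B_def iv)
    show "lo B u \<in> nodes B" unfolding loe using ndnodes[of "Suc j"] ch jg(1) by simp
    show "hi B u \<in> nodes B" unfolding hie using ndnodes[of "Suc j"] ch jg(1) by simp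
    have gen: "\<And>c. nd (Suc j) (chd vo j c g) \<in> inner B \<Longrightarrow> precedes vo (var B u) (var B (nd (Suc j) (chd vo j c g)))"
    proof -
      fix c assume a: "nd (Suc j) (chd vo j c g) \<in> inner B"
      then have sj: "Suc j < m" using ndinner[of "Suc j" "chd vo j c g", OF _ ch a] jg(1) by simp
      then have "inv_into T h (nd (Suc j) (chd vo j c g)) = (Suc j, chd vo j c g)"
        using inv ch by (simp add: nd_def)
      then have "var B (nd (Suc j) (chd vo j c g)) = vo ! Suc j" by (simp add: B_def)
      then show "precedes vo (var B u) (var B (nd (Suc j) (chd vo j c g)))"
        unfolding precedes_def varu using sj m_def by (intro exI[of _ j] exI[of _ "Suc j"]) simp
    qed
    show "lo B u \<in> inner B \<longrightarrow> precedes vo (var B u) (var B (lo B u))"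
      using gen[of False] unfolding loe by simp
    show "hi B u \<in> inner B \<longrightarrow> precedes vo (var B u) (var B (hi B u))"
      using gen[of True] unfolding hie by simp
  qed
  have cardB: "card (nodes B) = 2 + (\<Sum>j<m. card (Sl vo f j))"
    by (simp add: B_def T_def Sl_finite)
  have "min_obdd_size vo f \<le> card (nodes B)"
    unfolding min_obdd_size_def using pi rep by (intro Least_le) blast
  then show ?thesis using cardB m_def by simp
qed


definition Mr :: "(nat\<Rightarrow>nat) \<Rightarrow> nat \<Rightarrow> nat \<Rightarrow> bool" where
  "Mr r x y = (x \<noteq> y \<and> (if x < y then y \<le> r x else x \<le> r y))"

lemma Mr_sym: "Mr r x y = Mr r y x"
  unfolding Mr_def by auto

definition Tf :: "(nat\<Rightarrow>nat) \<Rightarrow> nat \<Rightarrow> nat \<Rightarrow> nat \<Rightarrow> nat \<Rightarrow> nat" where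
  "Tf r B A A' s = min B (r (min A A' * B + s) + 1 - max A A' * B)"

definition cmpc :: "nat \<Rightarrow> nat \<Rightarrow> nat" where
  "cmpc A A' = (if A < A' then 0 else if A = A' then 1 else 2)"

definition Es :: "(nat\<Rightarrow>nat) \<Rightarrow> nat \<Rightarrow> nat \<Rightarrow> nat \<Rightarrow> nat set" where
  "Es r B A A' = (\<lambda>s. s + Tf r B A A' s) ` {..<B}"

definition Gf :: "nat \<Rightarrow> nat set \<Rightarrow> nat \<Rightarrow> nat \<Rightarrow> bool" where
  "Gf c E s t = (let T = (\<lambda>s. sorted_list_of_set E ! s - s) in
     if c = 0 then t < T s else if c = 2 then s < T t else s \<noteq> t \<and> (if s < t then t < T s else s < T t))"

lemma sl_nth: assumes "\<And>i j. i < j \<Longrightarrow> j < B \<Longrightarrow> F i < (F j::nat)" "s < B"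
  shows "sorted_list_of_set (F ` {..<B}) ! s = F s"
proof -
  define xs where "xs = map F [0..<B]"
  have set: "F ` {..<B} = set xs" by (auto simp: xs_def)
  have "sorted_wrt (<) xs" unfolding xs_def using assms(1) by (auto simp: sorted_wrt_iff_nth_less)
  then have "sorted xs" "distinct xs" by (auto simp: strict_sorted_iff)
  then have "sorted_list_of_set (set xs) = xs"
    by (simp add: sorted_list_of_set_sort_remdups distinct_remdups_id sorted_sort_id)
  then show ?thesis using set assms(2) by (simp add: xs_def)
qed

lemma Tf_mono: "mono r \<Longrightarrow> s \<le> s' \<Longrightarrow> Tf r B A A' s \<le> Tf r B A A' s'"
  unfolding Tf_def by (intro min.mono diff_le_mono add_le_mono1 monoD[of r]) auto

lemma Tf_le: "Tf r B A A' s \<le> B" unfolding Tf_def by simp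

lemma Es_nth: assumes "mono r" "s < B"
  shows "sorted_list_of_set (Es r B A A') ! s - s = Tf r B A A' s"
proof -
  have "sorted_list_of_set (Es r B A A') ! s = s + Tf r B A A' s"
    unfolding Es_def
  proof (rule sl_nth[OF _ assms(2)])
    fix i j assume "i < j" "j < B"
    then show "i + Tf r B A A' i < j + Tf r B A A' j" using Tf_mono[OF assms(1), of i j B A A'] by simp
  qed
  then show ?thesis by simp
qed

lemma Es_sub: "Es r B A A' \<subseteq> {..<2*B}"
  unfolding Es_def using Tf_le by (auto simp: less_Suc_eq_le) (smt (verit) Tf_le add_less_le_mono mult_2)

lemma blk_lt: fixes A A' B s t :: nat assumes "A < A'" "s < B" "t < B"
  shows "A*B + s < A'*B + t"
proof -
  have "Suc A * B \<le> A' * B" using assms(1) by (intro mult_right_mono) auto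
  then show ?thesis using assms by simp
qed

lemma blk_rep: assumes mono: "mono r" and st: "s < B" "t < B"
  shows "Mr r (A*B+s) (A'*B+t) = Gf (cmpc A A') (Es r B A A') s t"
proof -
  have T: "\<And>s. s < B \<Longrightarrow> sorted_list_of_set (Es r B A A') ! s - s = Tf r B A A' s"
    using Es_nth[OF mono] by blast
  consider "A < A'" | "A = A'" | "A' < A" by linarith
  then show ?thesis
  proof cases
    case 1
    have lt: "A*B + s < A'*B + t" using blk_lt[OF 1 st] .
    have "Mr r (A*B+s) (A'*B+t) = (A'*B+t \<le> r (A*B+s))" using lt by (simp add: Mr_def)
    also have "\<dots> = (t < Tf r B A A' s)" using 1 st by (auto simp: Tf_def)
    finally show ?thesis using 1 T st by (simp add: Gf_def cmpc_def)
  next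
    case 2
    show ?thesis
    proof (cases "s < t")
      case True
      then have "Mr r (A*B+s) (A'*B+t) = (A'*B+t \<le> r (A*B+s))" using 2 by (simp add: Mr_def)
      also have "\<dots> = (t < Tf r B A A' s)" using 2 st by (auto simp: Tf_def)
      finally show ?thesis using 2 T st True by (simp add: Gf_def cmpc_def)
    next
      case False
      show ?thesis
      proof (cases "s = t")
        case True then show ?thesis using 2 by (simp add: Gf_def cmpc_def Mr_def)
      next
        case False
        then have ts: "t < s" using \<open>\<not> s < t\<close> by simp
        then have "Mr r (A*B+s) (A'*B+t) = (A*B+s \<le> r (A'*B+t))" using 2 by (simp add: Mr_def)
        also have "\<dots> = (s < Tf r B A A' t)" using 2 st by (auto simp: Tf_def)
        finally show ?thesis using 2 T st ts by (simp add: Gf_def cmpc_def)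
      qed
    qed
  next
    case 3
    have lt: "A'*B + t < A*B + s" using blk_lt[OF 3 st(2,1)] .
    have "Mr r (A*B+s) (A'*B+t) = (A*B+s \<le> r (A'*B+t))" using lt by (simp add: Mr_def)
    also have "\<dots> = (s < Tf r B A A' t)" using 3 st by (auto simp: Tf_def)
    finally show ?thesis using 3 T st by (simp add: Gf_def cmpc_def)
  qed
qed

lemma card_small:
  fixes u w :: "'a \<Rightarrow> nat"
  assumes mono: "mono r" and u: "\<And>a. u a < B" and w: "\<And>a. w a < B"
  shows "card ((\<lambda>(A,A'). (\<lambda>a. Mr r (A*B + u a) (A'*B + w a))) ` X) \<le> 3 * 4^B"
proof -
  let ?G = "(\<lambda>(c,E). (\<lambda>a. Gf c E (u a) (w a)))"
  let ?P = "{0,1,2::nat} \<times> Pow {..<2*B}"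
  have sub: "(\<lambda>(A,A'). (\<lambda>a. Mr r (A*B + u a) (A'*B + w a))) ` X \<subseteq> ?G ` ?P"
  proof
    fix g assume "g \<in> (\<lambda>(A,A'). (\<lambda>a. Mr r (A*B + u a) (A'*B + w a))) ` X"
    then obtain A A' where g: "g = (\<lambda>a. Mr r (A*B + u a) (A'*B + w a))" by auto
    have "g = ?G (cmpc A A', Es r B A A')" unfolding g using blk_rep[OF mono u w] by auto
    moreover have "(cmpc A A', Es r B A A') \<in> ?P" using Es_sub by (auto simp: cmpc_def)
    ultimately show "g \<in> ?G ` ?P" by blast
  qed
  have "card ((\<lambda>(A,A'). (\<lambda>a. Mr r (A*B + u a) (A'*B + w a))) ` X) \<le> card (?G ` ?P)"
    by (rule card_mono[OF _ sub]) simp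
  also have "\<dots> \<le> card ?P" by (rule card_image_le) simp
  also have "\<dots> = 3 * 4^B" by (simp add: card_cartesian_product card_Pow power_mult)
  finally show ?thesis .
qed

lemma one_side: assumes mono: "mono r" and B: "0 < B" and AA: "A < A'" and st: "s < B" "t < B"
  and M: "Mr r (A*B+s) (A'*B+t)"
  shows "A' \<le> r (Suc A * B) div B"
proof -
  have lt: "A*B + s < A'*B + t" using blk_lt[OF AA st] .
  then have "A'*B+t \<le> r (A*B+s)" using M by (simp add: Mr_def)
  moreover have "r (A*B+s) \<le> r (Suc A * B)" using st by (intro monoD[OF mono]) simp
  ultimately have "A'*B \<le> r (Suc A * B)" by simp
  then show ?thesis using B by (metis div_le_mono nonzero_mult_div_cancel_right not_gr0)
qed

lemma zero_side: assumes mono: "mono r" and B: "0 < B" and AA: "A < A'" and st: "s < B" "t < B"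
  and M: "\<not> Mr r (A*B+s) (A'*B+t)"
  shows "r (A * B) div B \<le> A'"
proof -
  have lt: "A*B + s < A'*B + t" using blk_lt[OF AA st] .
  then have "r (A*B+s) < A'*B+t" using M by (auto simp: Mr_def)
  moreover have "r (A*B) \<le> r (A*B+s)" by (intro monoD[OF mono]) simp
  ultimately have "r (A*B) < Suc A' * B" using st by simp
  then show ?thesis using B by (simp add: div_less_iff_less_mult less_Suc_eq_le[symmetric])
qed

lemma telesc: assumes "mono (R::nat\<Rightarrow>nat)"
  shows "(\<Sum>A<K. Suc (R (Suc A)) - R A) + R 0 = R K + K"
proof (induction K)
  case 0 then show ?case by simp
next
  case (Suc K)
  have "R K \<le> R (Suc K)" using assms by (simp add: monoD)
  then show ?case using Suc by simp
qed

lemma card_large: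
  fixes u w :: "'a \<Rightarrow> nat"
  assumes mono: "mono r" and B: "0 < B" and rK: "r (K*B) = K*B"
    and u: "\<And>a. u a < B" and w: "\<And>a. w a < B"
  shows "card ((\<lambda>(A,A'). (\<lambda>a. Mr r (A*B + u a) (A'*B + w a))) ` ({..<K} \<times> {..<K})) \<le> 5 * K + 2"
proof -
  define bl where "bl = (\<lambda>(A,A'). (\<lambda>a. Mr r (A*B + u a) (A'*B + w a)))"
  define NC where "NC = {(A,A') \<in> {..<K} \<times> {..<K}. (\<exists>s<B. \<exists>t<B. Mr r (A*B+s) (A'*B+t)) \<and>
                                                   (\<exists>s<B. \<exists>t<B. \<not> Mr r (A*B+s) (A'*B+t))}"
  define R where "R = (\<lambda>A. r (A*B) div B)"
  define U where "U = Sigma {..<K} (\<lambda>A. {R A..R (Suc A)})"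
  have Rmono: "mono R" unfolding R_def
    by (rule monoI, rule div_le_mono, rule monoD[OF mono]) simp
  have finU: "finite U" unfolding U_def by simp
  have sub1: "bl ` ({..<K} \<times> {..<K}) \<subseteq> {(\<lambda>_. True), (\<lambda>_. False)} \<union> bl ` NC"
  proof
    fix g assume "g \<in> bl ` ({..<K} \<times> {..<K})"
    then obtain A A' where AA: "A < K" "A' < K" and g: "g = bl (A,A')" by auto
    show "g \<in> {(\<lambda>_. True), (\<lambda>_. False)} \<union> bl ` NC"
    proof (cases "(A,A') \<in> NC")
      case True then show ?thesis using g by blast
    next
      case False
      then have "(\<forall>s<B. \<forall>t<B. \<not> Mr r (A*B+s) (A'*B+t)) \<or> (\<forall>s<B. \<forall>t<B. Mr r (A*B+s) (A'*B+t))"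
        using AA by (auto simp: NC_def)
      then have "g = (\<lambda>_. False) \<or> g = (\<lambda>_. True)" unfolding g bl_def using u w by auto
      then show ?thesis by blast
    qed
  qed
  have sub2: "NC \<subseteq> (\<lambda>A. (A,A)) ` {..<K} \<union> U \<union> prod.swap ` U"
  proof
    fix p assume p: "p \<in> NC"
    then obtain A A' where pA: "p = (A,A')" "A < K" "A' < K" by (auto simp: NC_def)
    obtain s t s' t' where st: "s < B" "t < B" "Mr r (A*B+s) (A'*B+t)"
       "s' < B" "t' < B" "\<not> Mr r (A*B+s') (A'*B+t')" using p pA by (auto simp: NC_def)
    consider "A < A'" | "A = A'" | "A' < A" by linarith
    then show "p \<in> (\<lambda>A. (A,A)) ` {..<K} \<union> U \<union> prod.swap ` U"
    proof cases
      case 1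
      have "A' \<le> R (Suc A)" unfolding R_def by (rule one_side[OF mono B 1 st(1,2,3)])
      moreover have "R A \<le> A'" unfolding R_def by (rule zero_side[OF mono B 1 st(4,5,6)])
      ultimately have "p \<in> U" using pA by (simp add: U_def)
      then show ?thesis by blast
    next
      case 2 then show ?thesis using pA by blast
    next
      case 3
      have "A \<le> R (Suc A')" unfolding R_def
        by (rule one_side[OF mono B 3 st(2,1)]) (use st(3) Mr_sym in metis)
      moreover have "R A' \<le> A" unfolding R_def
        by (rule zero_side[OF mono B 3 st(5,4)]) (use st(6) Mr_sym in metis)
      ultimately have "(A',A) \<in> U" using pA by (simp add: U_def)
      then have "p \<in> prod.swap ` U" using pA by (metis prod.swap_def image_eqI fst_conv snd_conv)
      then show ?thesis by blast
    qed
  qed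
  have cU: "card U \<le> 2 * K"
  proof -
    have "card U = (\<Sum>A<K. Suc (R (Suc A)) - R A)" unfolding U_def by simp
    also have "\<dots> \<le> R K + K" using telesc[OF Rmono, of K] by linarith
    also have "R K = K" unfolding R_def rK using B by simp
    finally show ?thesis by simp
  qed
  have "card NC \<le> card ((\<lambda>A. (A,A)) ` {..<K} \<union> U \<union> prod.swap ` U)"
    by (rule card_mono[OF _ sub2]) (simp add: finU)
  also have "\<dots> \<le> card ((\<lambda>A. (A,A)) ` {..<K}) + card U + card (prod.swap ` U)"
    by (metis (no_types, lifting) card_Un_le le_trans add_le_mono1)
  also have "\<dots> \<le> K + card U + card U"
    using card_image_le[of "{..<K}" "\<lambda>A. (A,A)"] card_image_le[OF finU, of prod.swap]
    by simp
  finally have cNC: "card NC \<le> 5 * K" using cU by simp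
  have finNC: "finite NC" unfolding NC_def by (rule finite_subset[of _ "{..<K} \<times> {..<K}"]) auto
  have "card (bl ` ({..<K} \<times> {..<K})) \<le> card ({(\<lambda>_. True), (\<lambda>_. False)} \<union> bl ` NC)"
    by (rule card_mono[OF _ sub1]) (simp add: finNC)
  also have "\<dots> \<le> card {(\<lambda>_::'a. True), (\<lambda>_. False)} + card (bl ` NC)" by (rule card_Un_le)
  also have "\<dots> \<le> 2 + card NC" by (intro add_mono card_image_le finNC) (simp add: card_insert_le_m1)
  finally show ?thesis using cNC unfolding bl_def by simp
qed


lemma sq_le: "(e::nat) * e \<le> 16 * 2^e"
proof (induction e)
  case 0 then show ?case by simp
next
  case (Suc e)
  have "e < 2^e" by (rule less_exp)
  then have "2*e + 1 \<le> 16 * 2^e" by linarith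
  then show ?case using Suc by simp
qed

lemma sum_pow2: "(\<Sum>k<m. (2::nat)^k) < 2^m"
  by (induction m) auto

lemma sum_high: "(\<Sum>k<m. 5 * (2::nat)^k + 2) \<le> 5 * 2^m + 2 * m"
proof -
  have "(\<Sum>k<m. 5 * (2::nat)^k + 2) = 5 * (\<Sum>k<m. 2^k) + 2 * m"
    by (subst sum.distrib) (simp add: sum_distrib_left)
  then show ?thesis using sum_pow2[of m] by simp
qed

lemma arith_bound:
  fixes g :: "nat \<Rightarrow> nat" and n :: nat
  assumes n1: "n \<ge> 1" and hi: "\<And>k. k < n \<Longrightarrow> g k \<le> 5*2^k + 2"
    and lo: "\<And>k. k < n \<Longrightarrow> g k \<le> 3*4^(2^(n-k))"
  shows "(2 + 3*(\<Sum>k<n. g k)) * n \<le> 1000 * 2^n"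
proof (cases "n \<le> 3")
  case True
  have "(\<Sum>k<n. g k) \<le> (\<Sum>k<n. 5 * 2^k + 2)" by (rule sum_mono, rule hi) simp
  also have "\<dots> \<le> 5 * 2^n + 2 * n" by (rule sum_high)
  finally have S: "(\<Sum>k<n. g k) \<le> 5 * 2^n + 2 * n" .
  have "n = 1 \<or> n = 2 \<or> n = 3" using True n1 by auto
  then show ?thesis using S by auto
next
  case False
  then have n4: "n div 4 \<ge> 1" by simp
  obtain D where D: "2^D \<le> n div 4" "n div 4 < 2^(D+1)" using ex_power_ivl1[of 2 "n div 4"] n4 by auto
  define P where "P = (2::nat)^D"
  have P4: "4 * P \<le> n" using D(1) P_def by simp
  have P8: "n < 8 * P" using D(2) P_def by simp
  have Dn: "D \<le> n" using less_exp[of D] P4 unfolding P_def by linarith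
  define S1 where "S1 = (\<Sum>k<n-D. g k)"
  define S2 where "S2 = (\<Sum>k=n-D..<n. g k)"
  have split: "(\<Sum>k<n. g k) = S1 + S2"
    unfolding S1_def S2_def using sum.atLeastLessThan_concat[of 0 "n-D" n g] Dn by (simp add: lessThan_atLeast0)
  have "S1 \<le> (\<Sum>k<n-D. 5 * 2^k + 2)" unfolding S1_def by (rule sum_mono, rule hi) simp
  also have "\<dots> \<le> 5 * 2^(n-D) + 2 * (n-D)" by (rule sum_high)
  finally have S1: "S1 \<le> 5 * 2^(n-D) + 2 * n" by simp
  have "S2 \<le> (\<Sum>k=n-D..<n. 3 * 4^P)" unfolding S2_def
  proof (rule sum_mono)
    fix k assume k: "k \<in> {n-D..<n}"
    then have "n - k \<le> D" by auto
    then have "(2::nat)^(n-k) \<le> P" unfolding P_def by (rule power_increasing) simp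
    then have f4: "(4::nat)^(2^(n-k)) \<le> 4^P" by (rule power_increasing) simp
    have "g k \<le> 3 * 4^(2^(n-k))" using lo[of k] k by simp
    then show "g k \<le> 3 * 4^P" using f4 by linarith
  qed
  also have "\<dots> = D * (3 * 4^P)" using Dn by simp
  finally have S2: "S2 \<le> D * (3 * 4^P)" .
  have pw: "2^(n-D) * P = (2::nat)^n" unfolding P_def using Dn by (simp add: power_add[symmetric])
  have A1: "2^(n-D) * n \<le> 8 * (2::nat)^n"
  proof -
    have "2^(n-D) * n \<le> 2^(n-D) * (8*P)" using P8 by simp
    also have "\<dots> = 8 * 2^n" using pw by simp
    finally show ?thesis .
  qed
  have A2: "n * n \<le> 16 * (2::nat)^n" by (rule sq_le)
  define e where "e = n - 2*P"
  have ne: "n \<le> 2 * e" using P4 e_def by simp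
  have "n * n \<le> (2*e) * (2*e)" using ne by (intro mult_le_mono) auto
  also have "\<dots> = 4 * (e * e)" by simp
  also have "\<dots> \<le> 4 * (16 * 2^e)" using sq_le[of e] by simp
  finally have nn: "n * n \<le> 64 * 2^e" by simp
  have ep: "(2::nat)^e * 4^P = 2^n"
  proof -
    have "(4::nat)^P = 2^(2*P)" by (simp add: power_mult)
    then show ?thesis using e_def P4 by (simp add: power_add[symmetric])
  qed
  have A3: "n * n * 4^P \<le> 64 * (2::nat)^n"
  proof -
    have "n * n * 4^P \<le> 64 * 2^e * 4^P" using nn by simp
    also have "\<dots> = 64 * 2^n" using ep by simp
    finally show ?thesis .
  qed
  have B1: "S1 * n \<le> 40 * 2^n + 32 * 2^n"
  proof -
    have "S1 * n \<le> (5 * 2^(n-D) + 2 * n) * n" using S1 by simp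
    also have "\<dots> = 5 * (2^(n-D) * n) + 2 * (n * n)" by (simp add: algebra_simps)
    also have "\<dots> \<le> 5 * (8 * 2^n) + 2 * (16 * 2^n)" using A1 A2 by (simp add: mult.commute)
    finally show ?thesis by simp
  qed
  have B2: "S2 * n \<le> 3 * (64 * 2^n)"
  proof -
    have "S2 * n \<le> D * (3 * 4^P) * n" using S2 by simp
    also have "\<dots> \<le> n * (3 * 4^P) * n" using Dn by simp
    also have "\<dots> = 3 * (n * n * 4^P)" by (simp add: algebra_simps)
    also have "\<dots> \<le> 3 * (64 * 2^n)" using A3 by simp
    finally show ?thesis .
  qed
  have nn2: "n \<le> 2^n" using less_exp[of n] by simp
  have "(2 + 3*(\<Sum>k<n. g k)) * n = 2 * n + 3 * (S1 * n) + 3 * (S2 * n)"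
    by (simp add: split algebra_simps)
  then show ?thesis using B1 B2 nn2 by linarith
qed


lemma io_Suc: "interleaved_order (Suc n) = [(False,n),(True,n)] @ interleaved_order n"
  by (simp add: interleaved_order_def)

lemma io_len: "length (interleaved_order n) = 2*n"
  by (induction n) (simp_all add: io_Suc interleaved_order_def)

lemma io_nth: "j < 2*n \<Longrightarrow> interleaved_order n ! j = (odd j, n - 1 - j div 2)"
proof (induction n arbitrary: j)
  case 0 then show ?case by (simp add: interleaved_order_def)
next
  case (Suc n)
  show ?case
  proof (cases j)
    case 0 then show ?thesis by (simp add: io_Suc)
  next
    case (Suc j1)
    show ?thesis
    proof (cases j1)
      case 0 then show ?thesis using Suc by (simp add: io_Suc)
    next
      case (Suc j')
      have jj: "j = Suc (Suc j')" using \<open>j = Suc j1\<close> Suc by simp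
      have lt: "j' < 2*n" using Suc.prems jj by simp
      have "interleaved_order (Suc n) ! j = interleaved_order n ! j'"
        unfolding jj io_Suc by simp
      also have "\<dots> = (odd j', n - 1 - j' div 2)" by (rule Suc.IH[OF lt])
      also have "\<dots> = (odd j, Suc n - 1 - j div 2)" using lt unfolding jj by simp
      finally show ?thesis .
    qed
  qed
qed

lemma io_distinct: "distinct (interleaved_order n)"
proof (subst distinct_conv_nth, intro allI impI)
  fix i j assume i: "i < length (interleaved_order n)" and j: "j < length (interleaved_order n)" and ij: "i \<noteq> j"
  have "(odd i, n - 1 - i div 2) \<noteq> (odd j, n - 1 - j div 2)"
  proof
    assume eq: "(odd i, n - 1 - i div 2) = (odd j, n - 1 - j div 2)"
    have "i div 2 < n" "j div 2 < n" using i j by (auto simp: io_len)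
    moreover have "n - 1 - i div 2 = n - 1 - j div 2" using eq by simp
    ultimately have "i div 2 = j div 2" by arith
    moreover have "odd i = odd j" using eq by simp
    then have "i mod 2 = j mod 2" by (metis odd_iff_mod_2_eq_one not_mod_2_eq_1_eq_0)
    ultimately show False using ij by (metis div_mult_mod_eq)
  qed
  then show "interleaved_order n ! i \<noteq> interleaved_order n ! j" using i j by (simp add: io_nth io_len)
qed

lemma io_set_take: assumes "k \<le> n"
  shows "set (take (2*k) (interleaved_order n)) = {v. n - k \<le> snd v \<and> snd v < n}"
proof -
  have "set (take (2*k) (interleaved_order n)) = (!) (interleaved_order n) ` {0..<2*k}"
    using assms by (simp add: nth_image io_len)
  also have "\<dots> = {v. n - k \<le> snd v \<and> snd v < n}"
  proof (intro equalityI subsetI)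
    fix v :: var assume "v \<in> (!) (interleaved_order n) ` {0..<2*k}"
    then obtain j where j: "j < 2*k" "v = interleaved_order n ! j" by auto
    then have "v = (odd j, n - 1 - j div 2)" using assms by (simp add: io_nth)
    then show "v \<in> {v. n - k \<le> snd v \<and> snd v < n}" using j assms by auto
  next
    fix v :: var assume v: "v \<in> {v. n - k \<le> snd v \<and> snd v < n}"
    obtain b i where bi: "v = (b,i)" by (cases v)
    define j where "j = 2*(n-1-i) + (if b then 1 else 0)"
    have jk: "j < 2*k" using v bi by (auto simp: j_def)
    have "interleaved_order n ! j = (odd j, n - 1 - j div 2)" using jk assms by (simp add: io_nth)
    also have "\<dots> = v" using v bi by (auto simp: j_def)
    finally show "v \<in> (!) (interleaved_order n) ` {0..<2*k}" using jk by force
  qed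
  finally show ?thesis .
qed

lemma io_set: "set (interleaved_order n) = {v. snd v < n}"
  using io_set_take[of n n] by (simp add: io_len)

lemma sum_split_shift: "(\<Sum>i<m+k. f i) = (\<Sum>i<m. f i) + (\<Sum>i<k. f (m+i::nat))"
  by (induction k) (simp_all add: add.assoc)

lemma pow_sum_lt: "(\<Sum>i<k. if P i then (2::nat)^i else 0) < 2^k"
proof (induction k)
  case 0 then show ?case by simp
next
  case (Suc k) then show ?case by (simp split: if_splits)
qed

definition HXb :: "bool \<Rightarrow> nat \<Rightarrow> nat \<Rightarrow> (var\<Rightarrow>bool) \<Rightarrow> nat" where
  "HXb c n k b = (\<Sum>i<k. if b (c, n-k+i) then 2^i else 0)"

lemma bits_split: assumes "k \<le> n"
  shows "bits_x n b = bits_x (n-k) b + 2^(n-k) * HXb False n k b"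
    and "bits_y n b = bits_y (n-k) b + 2^(n-k) * HXb True n k b"
proof -
  have nn: "n = (n-k) + k" using assms by simp
  show "bits_x n b = bits_x (n-k) b + 2^(n-k) * HXb False n k b"
    unfolding bits_x_def HXb_def
    by (subst nn, subst sum_split_shift) (auto simp: sum_distrib_left power_add intro!: sum.cong)
  show "bits_y n b = bits_y (n-k) b + 2^(n-k) * HXb True n k b"
    unfolding bits_y_def HXb_def
    by (subst nn, subst sum_split_shift) (auto simp: sum_distrib_left power_add intro!: sum.cong)
qed

lemma bits_x_lt: "bits_x m a < 2^m" unfolding bits_x_def by (rule pow_sum_lt)
lemma bits_y_lt: "bits_y m a < 2^m" unfolding bits_y_def by (rule pow_sum_lt)

definition rr :: "nat \<Rightarrow> (nat \<Rightarrow> real) \<Rightarrow> nat \<Rightarrow> nat" where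
  "rr N l x = (if x < N then Max {j. j < N \<and> l j \<le> l x + 1} else x)"

lemma l_mono: "unit_interval_rep N l \<Longrightarrow> i \<le> j \<Longrightarrow> j < N \<Longrightarrow> l i \<le> l j"
  unfolding unit_interval_rep_def by (cases "i = j") (auto intro: less_imp_le)

lemma rr_props: assumes "x < N"
  shows "rr N l x < N" "x \<le> rr N l x" "rr N l x \<in> {j. j < N \<and> l j \<le> l x + 1}"
proof -
  let ?S = "{j. j < N \<and> l j \<le> l x + 1}"
  have fin: "finite ?S" by simp
  have xS: "x \<in> ?S" using assms by simp
  have "Max ?S \<in> ?S" using fin xS by (intro Max_in) auto
  then show "rr N l x \<in> ?S" "rr N l x < N" using assms by (auto simp: rr_def)
  show "x \<le> rr N l x" using fin xS assms by (simp add: rr_def)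
qed

lemma rr_le_iff: assumes U: "unit_interval_rep N l" and "x < N" "y < N"
  shows "y \<le> rr N l x \<longleftrightarrow> l y \<le> l x + 1"
proof
  assume "y \<le> rr N l x"
  moreover have "rr N l x \<in> {j. j < N \<and> l j \<le> l x + 1}" using rr_props(3)[OF assms(2)] .
  ultimately show "l y \<le> l x + 1" using l_mono[OF U, of y "rr N l x"] by auto
next
  assume "l y \<le> l x + 1"
  then have "y \<in> {j. j < N \<and> l j \<le> l x + 1}" using assms by simp
  then show "y \<le> rr N l x" using assms(2) by (simp add: rr_def)
qed

lemma rr_mono: assumes U: "unit_interval_rep N l" shows "mono (rr N l)"
proof (rule monoI)
  fix x x' :: nat assume xx: "x \<le> x'"
  show "rr N l x \<le> rr N l x'"
  proof (cases "x' < N")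
    case True
    then have xN: "x < N" using xx by simp
    have "rr N l x \<le> rr N l x'"
    proof -
      have "rr N l x < N" "l (rr N l x) \<le> l x + 1" using rr_props[OF xN] by auto
      moreover have "l x \<le> l x'" using l_mono[OF U xx True] .
      ultimately have "l (rr N l x) \<le> l x' + 1" by simp
      then show ?thesis using rr_le_iff[OF U True \<open>rr N l x < N\<close>] by simp
    qed
    then show ?thesis .
  next
    case False
    then have "rr N l x' = x'" by (simp add: rr_def)
    moreover have "rr N l x \<le> x'"
      using False xx rr_props(1)[of x N l] by (cases "x < N") (auto simp: rr_def)
    ultimately show ?thesis by simp
  qed
qed

lemma interval_meet: fixes a b :: real assumes "a < b"
  shows "({a..a+1} \<inter> {b..b+1} \<noteq> {}) \<longleftrightarrow> b \<le> a + 1"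
proof
  assume "{a..a+1} \<inter> {b..b+1} \<noteq> {}"
  then obtain z where "z \<in> {a..a+1}" "z \<in> {b..b+1}" by blast
  then show "b \<le> a + 1" by auto
next
  assume "b \<le> a + 1"
  then have "b \<in> {a..a+1} \<inter> {b..b+1}" using assms by auto
  then show "{a..a+1} \<inter> {b..b+1} \<noteq> {}" by blast
qed

lemma edge_lt: assumes U: "unit_interval_rep N l" and "x < y" "y < N"
  shows "uig_edge l x y \<longleftrightarrow> y \<le> rr N l x"
proof -
  have "l x < l y" using U assms unfolding unit_interval_rep_def by blast
  then show ?thesis using rr_le_iff[OF U, of x y] assms interval_meet[of "l x" "l y"]
    by (simp add: uig_edge_def)
qed

lemma uig_sym: "uig_edge l x y = uig_edge l y x"
  unfolding uig_edge_def by auto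

lemma edge_Mr: assumes U: "unit_interval_rep N l"
  shows "(x < N \<and> y < N \<and> uig_edge l x y) = Mr (rr N l) x y"
proof -
  have key: "\<And>x y. x < y \<Longrightarrow> (x < N \<and> y < N \<and> uig_edge l x y) = (y \<le> rr N l x)"
  proof -
    fix x y :: nat assume xy: "x < y"
    show "(x < N \<and> y < N \<and> uig_edge l x y) = (y \<le> rr N l x)"
    proof (cases "y < N")
      case True then show ?thesis using edge_lt[OF U xy True] xy by simp
    next
      case False
      have "\<not> y \<le> rr N l x"
        using False xy rr_props(1)[of x N l] by (cases "x < N") (auto simp: rr_def)
      then show ?thesis using False by simp
    qed
  qed
  consider "x < y" | "x = y" | "y < x" by linarith
  then show ?thesis
  proof cases
    case 1 then show ?thesis using key[OF 1] by (simp add: Mr_def)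
  next
    case 2 then show ?thesis by (simp add: Mr_def uig_edge_def)
  next
    case 3 then show ?thesis using key[OF 3] uig_sym[of l x y] by (auto simp: Mr_def)
  qed
qed

lemma chi_Mr: assumes U: "unit_interval_rep N l"
  shows "chi_E N l a = Mr (rr N l) (bits_x (nbits N) a) (bits_y (nbits N) a)"
  using edge_Mr[OF U] by (simp add: chi_E_def Let_def)

lemma chi_dep: "(\<forall>v\<in>set (interleaved_order (nbits N)). a v = a' v) \<Longrightarrow> chi_E N l a = chi_E N l a'"
proof -
  assume h: "\<forall>v\<in>set (interleaved_order (nbits N)). a v = a' v"
  then have hh: "\<And>c i. i < nbits N \<Longrightarrow> a (c,i) = a' (c,i)" unfolding io_set by simp
  have e: "bits_x (nbits N) a = bits_x (nbits N) a'" "bits_y (nbits N) a = bits_y (nbits N) a'"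
    unfolding bits_x_def bits_y_def by (rule sum.cong, simp, simp add: hh)+
  show ?thesis unfolding chi_E_def Let_def using e by simp
qed

lemma subf_level:
  assumes U: "unit_interval_rep N l" and k: "k \<le> nbits N"
  shows "subf (interleaved_order (nbits N)) (chi_E N l) (2*k) p =
    (\<lambda>a. Mr (rr N l) (HXb False (nbits N) k p * 2^(nbits N - k) + bits_x (nbits N - k) a)
                     (HXb True (nbits N) k p * 2^(nbits N - k) + bits_y (nbits N - k) a))"
proof (rule ext)
  fix a
  let ?n = "nbits N"
  let ?b = "mrg (interleaved_order ?n) (2*k) p a"
  have mb: "\<And>c i. ?b (c,i) = (if ?n - k \<le> i \<and> i < ?n then p (c,i) else a (c,i))"
    using io_set_take[OF k] by (simp add: mrg_def)
  have lx: "bits_x (?n-k) ?b = bits_x (?n-k) a" unfolding bits_x_def using k by (intro sum.cong) (auto simp: mb)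
  have ly: "bits_y (?n-k) ?b = bits_y (?n-k) a" unfolding bits_y_def using k by (intro sum.cong) (auto simp: mb)
  have hx: "HXb False ?n k ?b = HXb False ?n k p" unfolding HXb_def using k by (intro sum.cong) (auto simp: mb)
  have hy: "HXb True ?n k ?b = HXb True ?n k p" unfolding HXb_def using k by (intro sum.cong) (auto simp: mb)
  show "subf (interleaved_order ?n) (chi_E N l) (2*k) p a =
    Mr (rr N l) (HXb False ?n k p * 2^(?n - k) + bits_x (?n - k) a)
                (HXb True ?n k p * 2^(?n - k) + bits_y (?n - k) a)"
  proof -
    have e1: "subf (interleaved_order ?n) (chi_E N l) (2*k) p a = Mr (rr N l) (bits_x ?n ?b) (bits_y ?n ?b)"
      unfolding subf_def by (rule chi_Mr[OF U])
    have e2: "bits_x ?n ?b = HXb False ?n k p * 2^(?n - k) + bits_x (?n - k) a"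
      using bits_split(1)[OF k, of ?b] lx hx by (simp only: mult.commute add.commute)
    have e3: "bits_y ?n ?b = HXb True ?n k p * 2^(?n - k) + bits_y (?n - k) a"
      using bits_split(2)[OF k, of ?b] ly hy by (simp only: mult.commute add.commute)
    show ?thesis unfolding e1 e2 e3 ..
  qed
qed


lemma nbits_facts: assumes N: "N \<ge> 2"
  shows "nbits N \<ge> 1" "N \<le> 2^(nbits N)" "2^(nbits N) < 2*N"
        "log 2 (real N) \<le> real (nbits N)" "log 2 (real N) > 0"
proof -
  define x where "x = log 2 (real N)"
  have x1: "x \<ge> 1" unfolding x_def using N by simp
  have c1: "\<lceil>x\<rceil> \<ge> 1" using x1 by linarith
  have nx: "real (nbits N) = of_int \<lceil>x\<rceil>" unfolding nbits_def x_def[symmetric] using c1 by simp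
  show "log 2 (real N) \<le> real (nbits N)" using nx x_def by (simp add: le_of_int_ceiling)
  show "log 2 (real N) > 0" using x1 x_def by simp
  show "nbits N \<ge> 1" using nx c1 by linarith
  have "real N = 2 powr x" unfolding x_def using N by simp
  also have "\<dots> \<le> 2 powr (real (nbits N))" using nx by (intro powr_mono) (simp_all add: le_of_int_ceiling)
  also have "\<dots> = 2 ^ nbits N" by (simp add: powr_realpow)
  finally have "real N \<le> real (2 ^ nbits N)" by simp
  then show "N \<le> 2^(nbits N)" by linarith
  have lt: "real (nbits N) - 1 < x" using nx ceiling_correct[of x] by linarith
  have "2 powr (real (nbits N) - 1) < 2 powr x" using lt by simp
  also have "\<dots> = real N" unfolding x_def using N by simp
  finally have "2 powr (real (nbits N) - 1) < real N" .
  moreover have "2 powr (real (nbits N) - 1) = 2^(nbits N) / 2"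
    by (simp add: powr_diff powr_realpow)
  ultimately have "real (2^(nbits N)) < real (2*N)" by simp
  then show "2^(nbits N) < 2*N" by linarith
qed

lemma level_bounds:
  assumes U: "unit_interval_rep N l" and k: "k < nbits N" and N: "N \<le> 2^(nbits N)"
  shows "card (Sl (interleaved_order (nbits N)) (chi_E N l) (2*k)) \<le> 5*2^k + 2"
    and "card (Sl (interleaved_order (nbits N)) (chi_E N l) (2*k)) \<le> 3*4^(2^(nbits N - k))"
proof -
  let ?n = "nbits N"
  define B where "B = (2::nat)^(?n - k)"
  define K where "K = (2::nat)^k"
  define F where "F = (\<lambda>(A,A'). (\<lambda>a. Mr (rr N l) (A*B + bits_x (?n - k) a) (A'*B + bits_y (?n - k) a)))"
  define HH where "HH = (\<lambda>p. (HXb False ?n k p, HXb True ?n k p))"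
  have S: "Sl (interleaved_order ?n) (chi_E N l) (2*k) = F ` (HH ` UNIV)"
    unfolding Sl_def using subf_level[OF U, of k] k by (auto simp: F_def HH_def B_def image_iff)
  have u: "\<And>a. bits_x (?n - k) a < B" "\<And>a. bits_y (?n - k) a < B" unfolding B_def
    by (simp_all add: bits_x_lt bits_y_lt)
  have mono: "mono (rr N l)" by (rule rr_mono[OF U])
  show "card (Sl (interleaved_order ?n) (chi_E N l) (2*k)) \<le> 3*4^(2^(?n - k))"
    unfolding S F_def using card_small[OF mono u, where X="HH ` UNIV"] unfolding B_def by simp
  have HHsub: "HH ` UNIV \<subseteq> {..<K} \<times> {..<K}"
    unfolding HH_def K_def HXb_def using pow_sum_lt by auto
  have KB: "K * B = 2^?n" unfolding K_def B_def using k by (simp add: power_add[symmetric])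
  have rK: "rr N l (K*B) = K*B" unfolding KB using N by (simp add: rr_def)
  have "card (F ` (HH ` UNIV)) \<le> card (F ` ({..<K} \<times> {..<K}))"
    by (rule card_mono) (simp, use HHsub in blast)
  also have "\<dots> \<le> 5 * K + 2" unfolding F_def
    by (rule card_large[OF mono _ rK u]) (simp add: B_def)
  finally show "card (Sl (interleaved_order ?n) (chi_E N l) (2*k)) \<le> 5*2^k + 2"
    unfolding S K_def .
qed

lemma sum_even_odd: fixes h :: "nat \<Rightarrow> nat"
  assumes "\<And>k. k < m \<Longrightarrow> h (Suc (2*k)) \<le> 2 * h (2*k)"
  shows "(\<Sum>j<2*m. h j) \<le> (\<Sum>k<m. 3 * h (2*k))"
  using assms
proof (induction m)
  case 0 then show ?case by simp
next
  case (Suc m)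
  have "(\<Sum>j<2*Suc m. h j) = (\<Sum>j<2*m. h j) + h (2*m) + h (Suc (2*m))" by simp
  also have "\<dots> \<le> (\<Sum>k<m. 3 * h (2*k)) + h (2*m) + 2 * h (2*m)"
    using Suc.IH Suc.prems[of m] Suc.prems by (intro add_mono) auto
  also have "\<dots> = (\<Sum>k<Suc m. 3 * h (2*k))" by simp
  finally show ?case .
qed

theorem mainTheorem2:
  shows "\<exists>c::real. c > 0 \<and>
    (\<forall>N (l :: nat \<Rightarrow> real). N \<ge> 2 \<and> unit_interval_rep N l \<longrightarrow>
       real (min_obdd_size (interleaved_order (nbits N)) (chi_E N l)) \<le> c * real N / log 2 (real N))"
proof (intro exI[of _ 2000] conjI allI impI)
  fix N :: nat and l :: "nat \<Rightarrow> real"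
  assume "N \<ge> 2 \<and> unit_interval_rep N l"
  then have N: "N \<ge> 2" and U: "unit_interval_rep N l" by auto
  define n where "n = nbits N"
  define vo where "vo = interleaved_order n"
  define f where "f = chi_E N l"
  note nf = nbits_facts[OF N, folded n_def]
  define g where "g = (\<lambda>k. card (Sl vo f (2*k)))"
  have size1: "min_obdd_size vo f \<le> 2 + (\<Sum>j<2*n. card (Sl vo f j))"
  proof -
    have dep: "\<And>a a'. (\<forall>v\<in>set vo. a v = a' v) \<Longrightarrow> f a = f a'"
      unfolding vo_def f_def n_def by (rule chi_dep)
    have dv: "distinct vo" unfolding vo_def by (rule io_distinct)
    show ?thesis using obdd_upper[where vo=vo and f=f, OF dv dep] by (simp add: vo_def io_len)
  qed
  have "(\<Sum>j<2*n. card (Sl vo f j)) \<le> (\<Sum>k<n. 3 * g k)"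
    unfolding g_def
    by (rule sum_even_odd) (simp add: Sl_Suc_card vo_def io_distinct io_len)
  then have size2: "min_obdd_size vo f \<le> 2 + 3 * (\<Sum>k<n. g k)" using size1 by (simp add: sum_distrib_left)
  have "(2 + 3 * (\<Sum>k<n. g k)) * n \<le> 1000 * 2^n"
  proof (rule arith_bound)
    show "n \<ge> 1" using nf(1) by simp
    have N2: "N \<le> 2^(nbits N)" using nf(2) n_def by simp
    show "g k \<le> 5*2^k + 2" if "k < n" for k
    proof -
      have "k < nbits N" using that n_def by simp
      from level_bounds(1)[OF U this N2] show ?thesis by (simp add: g_def vo_def f_def n_def)
    qed
    show "g k \<le> 3*4^(2^(n-k))" if "k < n" for k
    proof -
      have "k < nbits N" using that n_def by simp
      from level_bounds(2)[OF U this N2] show ?thesis by (simp add: g_def vo_def f_def n_def)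
    qed
  qed
  then have "min_obdd_size vo f * n \<le> 1000 * 2^n" using size2 by (meson le_trans mult_le_mono1)
  then have r1: "real (min_obdd_size vo f) * real n \<le> 1000 * 2^n" by (metis of_nat_le_iff of_nat_mult of_nat_numeral of_nat_power)
  have r2: "(2::real)^n < 2 * real N" using nf(3) by (metis of_nat_less_iff of_nat_mult of_nat_numeral of_nat_power)
  have n1: "n \<ge> 1" using nf(1) by simp
  have npos: "real n > 0" using n1 by simp
  have "real (min_obdd_size vo f) * real n \<le> 2000 * real N" using r1 r2 by linarith
  then have "real (min_obdd_size vo f) \<le> 2000 * real N / real n" using npos by (simp add: pos_le_divide_eq)
  also have "\<dots> \<le> 2000 * real N / log 2 (real N)"
    using nf(4,5) by (intro divide_left_mono) auto
  finally show "real (min_obdd_size (interleaved_order (nbits N)) (chi_E N l)) \<le> 2000 * real N / log 2 (real N)"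
    unfolding vo_def f_def n_def .
qed simp

end
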